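(* Every polyhedral loss $L:\mathbb{R}^d\to\mathbb{R}^{\mathcal{Y}}_+$ embeds some discrete loss.
   Context: $\mathcal{Y}$ is a finite set of labels; $\mathbb{R}^{\mathcal{Y}}_+$ is the nonnegative orthant; $\Delta_{\mathcal{Y}}$ is the probability simplex on $\mathcal{Y}$. A loss is a map $L:\mathcal{R}\to\mathbb{R}^{\mathcal{Y}}_+$; expected loss under $p$ is $\langle p,L(r)\rangle$. A loss is discrete if its report set $\mathcal{R}$ is finite. $L:\mathbb{R}^d\to\mathbb{R}^{\mathcal{Y}}_+$ is polyhedral if each coordinate $u\mapsto L(u)_y$ is a pointwise maximum of finitely many affine functions. $L$ is minimizable if $\inf_r\langle p,L(r)\rangle$ is attained for all $p\in\Delta_{\mathcal{Y}}$; then $\mathrm{prop}[L](p)=\arg\min_r\langle p,L(r)\rangle$. $\mathcal{S}\subseteq\mathcal{R}$ is representative for a minimizable loss $L$ if $\mathrm{prop}[L](p)\cap\mathcal{S}\neq\emptyset$ for all $p$. A minimizable $L:\mathbb{R}^d\to\mathbb{R}^{\mathcal{Y}}_+$ embeds $\ell:\mathcal{R}\to\mathbb{R}^{\mathcal{Y}}_+$ if there exist a representative set $\mathcal{S}$ for $\ell$ and an injective $\varphi:\mathcal{S}\to\mathbb{R}^d$ with (i) $L(\varphi(r))=\ell(r)$ for all $r\in\mathcal{S}$ and (ii) for all $p\in\Delta_{\mathcal{Y}}$, $r\in\mathcal{S}$: $r\in\mathrm{prop}[\ell](p)\iff\varphi(r)\in\mathrm{prop}[L](p)$. *)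

theory Defs
  imports "HOL-Analysis.Analysis"
begin

text \<open>Labels: a finite type 'y. Loss vectors: functions 'y \<Rightarrow> real.
  A loss on a report set R is a map ell :: 'r \<Rightarrow> 'y \<Rightarrow> real, only its values
  on R matter.\<close>

definition prob_simplex :: "('y::finite \<Rightarrow> real) set" where
  "prob_simplex = {p. (\<forall>y. 0 \<le> p y) \<and> (\<Sum>y\<in>UNIV. p y) = 1}"

definition exp_loss :: "('y::finite \<Rightarrow> real) \<Rightarrow> ('y \<Rightarrow> real) \<Rightarrow> real" where
  "exp_loss p v = (\<Sum>y\<in>UNIV. p y * v y)"

definition nonneg_loss_on :: "'r set \<Rightarrow> ('r \<Rightarrow> 'y \<Rightarrow> real) \<Rightarrow> bool" where
  "nonneg_loss_on R L \<longleftrightarrow> (\<forall>r\<in>R. \<forall>y. 0 \<le> L r y)"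

definition minimizable_on :: "'r set \<Rightarrow> ('r \<Rightarrow> 'y::finite \<Rightarrow> real) \<Rightarrow> bool" where
  "minimizable_on R L \<longleftrightarrow>
     (\<forall>p\<in>prob_simplex. \<exists>r\<in>R. \<forall>r'\<in>R. exp_loss p (L r) \<le> exp_loss p (L r'))"

definition prop_on :: "'r set \<Rightarrow> ('r \<Rightarrow> 'y::finite \<Rightarrow> real) \<Rightarrow> ('y \<Rightarrow> real) \<Rightarrow> 'r set" where
  "prop_on R L p = {r\<in>R. \<forall>r'\<in>R. exp_loss p (L r) \<le> exp_loss p (L r')}"

definition representative :: "'r set \<Rightarrow> ('r \<Rightarrow> 'y::finite \<Rightarrow> real) \<Rightarrow> 'r set \<Rightarrow> bool" where
  "representative R L S \<longleftrightarrow> S \<subseteq> R \<and> (\<forall>p\<in>prob_simplex. prop_on R L p \<inter> S \<noteq> {})"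

definition polyhedral :: "(real^'d \<Rightarrow> 'y \<Rightarrow> real) \<Rightarrow> bool" where
  "polyhedral L \<longleftrightarrow> (\<forall>y. \<exists>A :: ((real^'d) \<times> real) set. finite A \<and> A \<noteq> {} \<and>
       (\<forall>u. L u y = Max ((\<lambda>(a,b). a \<bullet> u + b) ` A)))"

definition embeds :: "(real^'d \<Rightarrow> 'y::finite \<Rightarrow> real) \<Rightarrow> 'r set \<Rightarrow> ('r \<Rightarrow> 'y \<Rightarrow> real) \<Rightarrow> bool" where
  "embeds L R ell \<longleftrightarrow>
     minimizable_on UNIV L \<and> minimizable_on R ell \<and>
     (\<exists>S \<phi>. representative R ell S \<and> inj_on \<phi> S \<and>
        (\<forall>r\<in>S. L (\<phi> r) = ell r) \<and>
        (\<forall>p\<in>prob_simplex. \<forall>r\<in>S. r \<in> prop_on R ell p \<longleftrightarrow> \<phi> r \<in> prop_on UNIV L p))"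

end

theory Submission
  imports Defs
begin
lemma lp_base:
  fixes q :: "'a::real_inner"
  assumes "affine A" "A \<noteq> {}" "\<forall>w\<in>A. m \<le> q \<bullet> w"
  shows "\<exists>w\<in>A. \<forall>v\<in>A. q \<bullet> w \<le> q \<bullet> v"
proof -
  obtain w0 where w0: "w0 \<in> A" using assms(2) by blast
  have "q \<bullet> w0 \<le> q \<bullet> w" if w: "w \<in> A" for w
  proof (rule ccontr)
    assume nt: "\<not> q \<bullet> w0 \<le> q \<bullet> w"
    define \<delta> where "\<delta> = q \<bullet> w0 - q \<bullet> w"
    have dp: "\<delta> > 0" using nt by (simp add: \<delta>_def)
    define t where "t = (q \<bullet> w0 - m + 1) / \<delta>"
    have "(1 - t) *\<^sub>R w0 + t *\<^sub>R w \<in> A" using assms(1) w0 w by (simp add: affine_alt)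
    then have "m \<le> q \<bullet> ((1 - t) *\<^sub>R w0 + t *\<^sub>R w)" using assms(3) by blast
    also have "\<dots> = q \<bullet> w0 - t * \<delta>" by (simp add: inner_add_right \<delta>_def algebra_simps)
    also have "t * \<delta> = q \<bullet> w0 - m + 1" using dp by (simp add: t_def)
    finally show False by simp
  qed
  then show ?thesis using w0 by blast
qed

lemma lp_attain:
  fixes q :: "'a::real_inner"
  assumes "finite C"
  shows "affine A \<Longrightarrow> S = A \<inter> {w. \<forall>(a,c)\<in>C. a \<bullet> w \<le> c} \<Longrightarrow> S \<noteq> {} \<Longrightarrow> \<forall>w\<in>S. m \<le> q \<bullet> w
    \<Longrightarrow> \<exists>w\<in>S. \<forall>v\<in>S. q \<bullet> w \<le> q \<bullet> v"
  using assms
proof (induction C arbitrary: A S m rule: finite_induct)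
  case empty
  then show ?case using lp_base[of A m q] by simp
next
  case (insert ac C)
  obtain a c where ac: "ac = (a, c)" by fastforce
  define S' where "S' = A \<inter> {w. \<forall>(a,c)\<in>C. a \<bullet> w \<le> c}"
  define S'' where "S'' = (A \<inter> {w. a \<bullet> w = c}) \<inter> {w. \<forall>(a,c)\<in>C. a \<bullet> w \<le> c}"
  have SS': "S = S' \<inter> {w. a \<bullet> w \<le> c}" using insert.prems ac unfolding S'_def by auto
  have S''S: "S'' \<subseteq> S" unfolding SS' S''_def S'_def by auto
  show ?case
  proof (cases "\<exists>w'\<in>S'. a \<bullet> w' \<le> c \<and> (\<forall>v\<in>S. q \<bullet> w' \<le> q \<bullet> v)")
    case True
    then show ?thesis using SS' by blast
  next
    case False
    have far: "\<exists>w''\<in>S'. c < a \<bullet> w'' \<and> q \<bullet> w'' \<le> q \<bullet> w" if w: "w \<in> S" for w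
    proof (cases "\<exists>m'. \<forall>v\<in>S'. m' \<le> q \<bullet> v")
      case True
      then obtain m' where "\<forall>v\<in>S'. m' \<le> q \<bullet> v" by blast
      moreover have "S' \<noteq> {}" using w SS' by blast
      ultimately obtain w' where w': "w' \<in> S'" "\<forall>v\<in>S'. q \<bullet> w' \<le> q \<bullet> v"
        using insert.IH[OF insert.prems(1) S'_def] by blast
      then have "\<not> a \<bullet> w' \<le> c" using False SS' by blast
      then show ?thesis using w' w SS' by force
    next
      case False
      then obtain w'' where w'': "w'' \<in> S'" "q \<bullet> w'' < m" by (meson not_le)
      then have "w'' \<notin> S" using insert.prems(4) by force
      then have "c < a \<bullet> w''" using SS' w'' by auto
      then show ?thesis using w'' w insert.prems(4) by force
    qed
    have cross: "\<exists>v\<in>S''. q \<bullet> v \<le> q \<bullet> w" if w: "w \<in> S" for w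
    proof -
      obtain w'' where w'': "w'' \<in> S'" "c < a \<bullet> w''" "q \<bullet> w'' \<le> q \<bullet> w" using far[OF w] by blast
      have wa: "a \<bullet> w \<le> c" "w \<in> S'" using w SS' by auto
      define t where "t = (c - a \<bullet> w) / (a \<bullet> w'' - a \<bullet> w)"
      have t0: "0 \<le> t" and t1: "t \<le> 1" using wa w'' by (auto simp: t_def divide_simps)
      define v where "v = (1 - t) *\<^sub>R w + t *\<^sub>R w''"
      have lin: "b \<bullet> v = (1 - t) * (b \<bullet> w) + t * (b \<bullet> w'')" for b
        by (simp add: v_def inner_add_right)
      have "a \<bullet> v = a \<bullet> w + t * (a \<bullet> w'' - a \<bullet> w)" unfolding lin by (simp add: algebra_simps)
      also have "t * (a \<bullet> w'' - a \<bullet> w) = c - a \<bullet> w" using w'' wa by (simp add: t_def)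
      finally have "a \<bullet> v = c" by simp
      moreover have "v \<in> A" using wa w'' insert.prems(1) unfolding S'_def v_def affine_alt by blast
      moreover have "a' \<bullet> v \<le> c'" if "(a', c') \<in> C" for a' c'
      proof -
        have "a' \<bullet> w \<le> c'" "a' \<bullet> w'' \<le> c'" using wa w'' that unfolding S'_def by auto
        then have "(1 - t) * (a' \<bullet> w) + t * (a' \<bullet> w'') \<le> (1 - t) * c' + t * c'"
          using t0 t1 by (intro add_mono mult_left_mono) auto
        then show ?thesis unfolding lin by (simp add: algebra_simps)
      qed
      moreover have "q \<bullet> v \<le> q \<bullet> w"
      proof -
        have "(1 - t) * (q \<bullet> w) + t * (q \<bullet> w'') \<le> (1 - t) * (q \<bullet> w) + t * (q \<bullet> w)"
          using t0 t1 w'' by (intro add_mono mult_left_mono) auto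
        then show ?thesis unfolding lin by (simp add: algebra_simps)
      qed
      ultimately show ?thesis unfolding S''_def by blast
    qed
    have ne: "S'' \<noteq> {}" using cross insert.prems(3) by blast
    have "affine (A \<inter> {w. a \<bullet> w = c})" using insert.prems(1) affine_hyperplane affine_Int by blast
    then obtain v where v: "v \<in> S''" "\<forall>x\<in>S''. q \<bullet> v \<le> q \<bullet> x"
      using insert.IH[OF _ S''_def ne] S''S insert.prems(4) by blast
    show ?thesis
    proof (rule bexI[of _ v])
      show "v \<in> S" using v S''S by blast
      show "\<forall>x\<in>S. q \<bullet> v \<le> q \<bullet> x" using v cross by (meson order_trans)
    qed
  qed
qed

lemma poly_min:
  fixes L :: "real^'d \<Rightarrow> 'y::finite \<Rightarrow> real" and A :: "'y \<Rightarrow> ((real^'d) \<times> real) set"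
  assumes fin: "\<And>y. finite (A y)" "\<And>y. A y \<noteq> {}"
    and LA: "\<And>u y. L u y = Max ((\<lambda>(a,b). a \<bullet> u + b) ` A y)"
    and nn: "\<And>u y. 0 \<le> L u y" and p: "p \<in> prob_simplex"
  shows "\<exists>u. \<forall>u'. exp_loss p (L u) \<le> exp_loss p (L u')"
proof -
  have p0: "\<And>y. 0 \<le> p y" using p by (simp add: prob_simplex_def)
  define C :: "(((real^'d) \<times> (real^'y)) \<times> real) set" where
    "C = (\<lambda>(y,(a,b)). ((a, - axis y 1), - b)) ` (SIGMA y:UNIV. A y)"
  have finC: "finite C" unfolding C_def using fin by (intro finite_imageI finite_SigmaI) auto
  have memC: "(\<forall>(a,c)\<in>C. a \<bullet> w \<le> c) \<longleftrightarrow> (\<forall>y. L (fst w) y \<le> snd w $ y)" for w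
  proof -
    obtain u t where w: "w = (u, t)" by fastforce
    have "(\<forall>(a,c)\<in>C. a \<bullet> w \<le> c) \<longleftrightarrow> (\<forall>y. \<forall>ab\<in>A y. fst ab \<bullet> u - t $ y \<le> - snd ab)"
      unfolding C_def w by (force simp: inner_axis' inner_minus_left)
    also have "\<dots> \<longleftrightarrow> (\<forall>y. \<forall>ab\<in>A y. fst ab \<bullet> u + snd ab \<le> t $ y)"
      by (auto simp: algebra_simps)
    also have "\<dots> \<longleftrightarrow> (\<forall>y. L u y \<le> t $ y)"
      unfolding LA using fin by (simp add: Max_le_iff split_beta)
    finally show ?thesis using w by simp
  qed
  define q where "q = ((0::real^'d), (\<chi> y. p y))"
  have qw: "q \<bullet> w = (\<Sum>y\<in>UNIV. p y * snd w $ y)" for w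
    by (cases w) (simp add: q_def inner_vec_def)
  define S where "S = UNIV \<inter> {w. \<forall>(a,c)\<in>C. a \<bullet> w \<le> c}"
  have Sin: "(u, \<chi> y. L u y) \<in> S" for u unfolding S_def memC by simp
  have lb: "exp_loss p (L (fst w)) \<le> q \<bullet> w" if "w \<in> S" for w
    using that unfolding S_def memC qw exp_loss_def
    by (auto intro!: sum_mono mult_left_mono p0)
  have lb0: "\<forall>w\<in>S. 0 \<le> q \<bullet> w"
  proof
    fix w assume "w \<in> S"
    have "0 \<le> exp_loss p (L (fst w))" unfolding exp_loss_def
      by (auto intro!: sum_nonneg mult_nonneg_nonneg p0 nn)
    then show "0 \<le> q \<bullet> w" using lb[OF \<open>w \<in> S\<close>] by linarith
  qed
  obtain w where w: "w \<in> S" "\<forall>v\<in>S. q \<bullet> w \<le> q \<bullet> v"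
    using lp_attain[OF finC affine_UNIV S_def _ lb0] Sin by blast
  have "exp_loss p (L (fst w)) \<le> exp_loss p (L u')" for u'
  proof -
    have "q \<bullet> (u', \<chi> y. L u' y) = exp_loss p (L u')" by (simp add: qw exp_loss_def)
    then show ?thesis using lb[OF w(1)] w(2) Sin[of u'] by force
  qed
  then show ?thesis by blast
qed

lemma key_cell:
  fixes L :: "real^'d \<Rightarrow> 'y::finite \<Rightarrow> real" and A :: "'y \<Rightarrow> ((real^'d) \<times> real) set"
  assumes fin: "\<And>y. finite (A y)" "\<And>y. A y \<noteq> {}"
    and LA: "\<And>u y. L u y = Max ((\<lambda>(a,b). a \<bullet> u + b) ` A y)"
    and umin: "\<forall>u'. exp_loss p (L u) \<le> exp_loss p (L u')"
    and act: "\<And>y ab. ab \<in> A y \<Longrightarrow> fst ab \<bullet> u + snd ab = L u y \<Longrightarrow> fst ab \<bullet> v + snd ab = L v y"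
  shows "exp_loss p (L v) \<le> exp_loss p (L u)"
proof -
  define g where "g x y ab = L x y - (fst ab \<bullet> x + snd ab)" for x y and ab :: "(real^'d) \<times> real"
  have g0: "0 \<le> g x y ab" if "ab \<in> A y" for x y ab
  proof -
    have "fst ab \<bullet> x + snd ab \<in> (\<lambda>(a,b). a \<bullet> x + b) ` A y" using that by (cases ab) force
    then show ?thesis unfolding g_def LA[of x y] using fin by simp
  qed
  have actin: "\<exists>ab\<in>A y. g x y ab = 0" for x y
  proof -
    have "Max ((\<lambda>(a,b). a \<bullet> x + b) ` A y) \<in> (\<lambda>(a,b). a \<bullet> x + b) ` A y"
      using fin by (intro Max_in) auto
    then show ?thesis unfolding g_def LA[of x y] by force
  qed
  define I where "I = {(y,ab). ab \<in> A y \<and> 0 < g u y ab}"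
  have finI: "finite I" unfolding I_def
    by (rule finite_subset[of _ "SIGMA y:UNIV. A y"]) (use fin in auto)
  define t where "t = Min (insert 1 ((\<lambda>(y,ab). g u y ab / (g v y ab + 1)) ` I))"
  have tpos: "0 < t" unfolding t_def using finI
    by (subst Min_gr_iff) (auto simp: I_def intro!: divide_pos_pos add_nonneg_pos g0)
  have tle: "t \<le> g u y ab / (g v y ab + 1)" if "ab \<in> A y" "0 < g u y ab" for y ab
    unfolding t_def using finI that by (intro Min_le) (auto simp: I_def)
  define z where "z = u + t *\<^sub>R (u - v)"
  have piece: "fst ab \<bullet> z + snd ab = (1 + t) * L u y - t * L v y - ((1 + t) * g u y ab - t * g v y ab)" for y ab
    by (simp add: z_def g_def inner_add_right inner_diff_right algebra_simps)
  have gap: "0 \<le> (1 + t) * g u y ab - t * g v y ab" if ab: "ab \<in> A y" for y ab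
  proof (cases "0 < g u y ab")
    case True
    have gv: "0 \<le> g v y ab" using g0 ab by blast
    have "t * (g v y ab + 1) \<le> g u y ab" using tle[OF ab True] gv by (simp add: field_simps)
    moreover have "0 \<le> t * g u y ab" using tpos True by simp
    moreover have "(1 + t) * g u y ab - t * g v y ab = g u y ab + t * g u y ab - t * g v y ab"
      by (simp add: algebra_simps)
    ultimately show ?thesis using tpos by (simp add: algebra_simps)
  next
    case False
    then have "g u y ab = 0" using g0[of ab y u, OF ab] by linarith
    then have "g v y ab = 0" using act[OF ab] unfolding g_def by simp
    then show ?thesis using \<open>g u y ab = 0\<close> by simp
  qed
  have Lz: "L z y = (1 + t) * L u y - t * L v y" for y
    unfolding LA[of z y]
  proof (rule Max_eqI)
    show "finite ((\<lambda>(a,b). a \<bullet> z + b) ` A y)" using fin by simp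
    show "x \<le> (1 + t) * L u y - t * L v y"
      if xin: "x \<in> (\<lambda>(a,b). a \<bullet> z + b) ` A y" for x
    proof -
      obtain ab where ab: "ab \<in> A y" "x = fst ab \<bullet> z + snd ab" using xin by force
      show ?thesis using piece[of ab y] gap[OF ab(1)] ab(2) by linarith
    qed
    obtain ab where ab: "ab \<in> A y" "g u y ab = 0" using actin by blast
    then have "g v y ab = 0" using act[OF ab(1)] unfolding g_def by simp
    then have "fst ab \<bullet> z + snd ab = (1 + t) * L u y - t * L v y" using piece[of ab y] ab by simp
    then show "(1 + t) * L u y - t * L v y \<in> (\<lambda>(a,b). a \<bullet> z + b) ` A y"
      using ab(1) by (cases ab) force
  qed
  have "exp_loss p (L z) = (1 + t) * exp_loss p (L u) - t * exp_loss p (L v)"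
    unfolding exp_loss_def Lz by (simp add: algebra_simps sum.distrib sum_distrib_left sum_subtractf)
  moreover have "exp_loss p (L u) \<le> exp_loss p (L z)" using umin by blast
  ultimately have "t * exp_loss p (L v) \<le> t * exp_loss p (L u)" by (simp add: algebra_simps)
  then show ?thesis using tpos by simp
qed

theorem theorem3:
  fixes L :: "real^'d \<Rightarrow> 'y::finite \<Rightarrow> real"
  assumes "nonneg_loss_on UNIV L"
    and "polyhedral L"
  shows "\<exists>(R :: nat set) (ell :: nat \<Rightarrow> 'y \<Rightarrow> real).
           finite R \<and> R \<noteq> {} \<and> nonneg_loss_on R ell \<and> embeds L R ell"
proof -
  have nn: "\<And>u y. 0 \<le> L u y" using assms(1) by (simp add: nonneg_loss_on_def)
  obtain A :: "'y \<Rightarrow> ((real^'d) \<times> real) set" where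
    A: "\<And>y. finite (A y)" "\<And>y. A y \<noteq> {}" "\<And>u y. L u y = Max ((\<lambda>(a,b). a \<bullet> u + b) ` A y)"
    using assms(2) unfolding polyhedral_def by metis
  define GM where "GM p x = (\<forall>u'. exp_loss p (L x) \<le> exp_loss p (L u'))" for p x
  define act where "act x = (\<lambda>y. {ab \<in> A y. fst ab \<bullet> x + snd ab = L x y})" for x
  define rp where "rp \<pi> = (SOME x. act x = \<pi>)" for \<pi>
  have act_rp: "act (rp (act x)) = act x" for x unfolding rp_def by (rule someI) (rule refl)
  define U where "U = rp ` range act"
  have ra: "range act \<subseteq> PiE UNIV (\<lambda>y. Pow (A y))" by (auto simp: act_def)
  have finU: "finite U" unfolding U_def
    by (intro finite_imageI finite_subset[OF ra] finite_PiE) (auto simp: A(1))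
  have glob: "\<exists>v\<in>U. GM p v" if p: "p \<in> prob_simplex" for p
  proof -
    obtain u where u: "GM p u" using poly_min[of A L p, OF A nn p] unfolding GM_def by blast
    have "exp_loss p (L (rp (act u))) \<le> exp_loss p (L u)"
    proof (rule key_cell[of A L, OF A])
      show "\<forall>u'. exp_loss p (L u) \<le> exp_loss p (L u')" using u unfolding GM_def .
      fix y ab assume "ab \<in> A y" "fst ab \<bullet> u + snd ab = L u y"
      then have "ab \<in> act u y" by (simp add: act_def)
      then have "ab \<in> act (rp (act u)) y" using act_rp by simp
      then show "fst ab \<bullet> rp (act u) + snd ab = L (rp (act u)) y" by (simp add: act_def)
    qed
    then have "GM p (rp (act u))" using u unfolding GM_def by (meson order_trans)
    then show ?thesis unfolding U_def by blast
  qed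
  obtain e where e: "bij_betw e {0..<card U} U" using ex_bij_betw_nat_finite[OF finU] by blast
  define R where "R = {0..<card U}"
  define ell where "ell i = L (e i)" for i
  have Une: "U \<noteq> {}" unfolding U_def by blast
  then have "card U > 0" using finU by (simp add: card_gt_0_iff)
  then have Rne: "R \<noteq> {}" unfolding R_def by auto
  have eR: "e ` R = U" using e unfolding R_def bij_betw_def by blast
  have F: "\<exists>r\<in>R. GM p (e r)" if "p \<in> prob_simplex" for p
    using glob[OF that] eR by blast
  have propR: "r \<in> prop_on R ell p \<longleftrightarrow> GM p (e r)" if pr: "p \<in> prob_simplex" "r \<in> R" for p r
  proof
    assume "r \<in> prop_on R ell p"
    then have h: "\<forall>r'\<in>R. exp_loss p (L (e r)) \<le> exp_loss p (L (e r'))"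
      by (simp add: prop_on_def ell_def)
    obtain r0 where "r0 \<in> R" "GM p (e r0)" using F[OF pr(1)] by blast
    then show "GM p (e r)" using h unfolding GM_def by (meson order_trans)
  next
    assume "GM p (e r)"
    then show "r \<in> prop_on R ell p" using pr(2) by (simp add: prop_on_def ell_def GM_def)
  qed
  have propU: "x \<in> prop_on UNIV L p \<longleftrightarrow> GM p x" for p x
    by (simp add: prop_on_def GM_def)
  have "embeds L R ell"
    unfolding embeds_def
  proof (intro conjI exI)
    show "minimizable_on UNIV L" unfolding minimizable_on_def
      using poly_min[of A L, OF A nn] by auto
    show "minimizable_on R ell" unfolding minimizable_on_def
      using F propR unfolding prop_on_def by blast
    show "representative R ell R" unfolding representative_def
      using F propR by blast
    show "inj_on e R" using e unfolding R_def bij_betw_def by blast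
    show "\<forall>r\<in>R. L (e r) = ell r" by (simp add: ell_def)
    show "\<forall>p\<in>prob_simplex. \<forall>r\<in>R. (r \<in> prop_on R ell p) = (e r \<in> prop_on UNIV L p)"
      using propR propU by blast
  qed
  moreover have "nonneg_loss_on R ell" by (simp add: nonneg_loss_on_def ell_def nn)
  moreover have "finite R" by (simp add: R_def)
  ultimately show ?thesis using Rne by blast
qed

end
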